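(* Let $G$ and $H$ be groups such that the power quandles $\mathrm{Pq}(G)$ and $\mathrm{Pq}(H)$ are isomorphic. Then the centers $\mathrm{Z}(G)$ and $\mathrm{Z}(H)$ have the same cardinality. If moreover $\mathrm{Z}(G)$ (equivalently $\mathrm{Z}(H)$) is finite, then $\mathrm{Z}(G)\cong\mathrm{Z}(H)$ as groups.
   Context: A power quandle $(P,\rhd,\pi,e)$ consists of a set $P$, a binary operation $\rhd$, an element $e$, and maps $\pi^n\colon P\to P$ ($n\in\mathbb{Z}$) satisfying: each $\lambda_a\colon b\mapsto a\rhd b$ is bijective and $a\rhd(b\rhd c)=(a\rhd b)\rhd(a\rhd c)$; $a\rhd a=a$; $e\rhd b=b$, $a\rhd e=e$; $\pi^1=\mathrm{id}$, $\pi^m\circ\pi^n=\pi^{mn}$; $\pi^0(a)=e$; $a\rhd\pi^n(b)=\pi^n(a\rhd b)$; $\pi^n(a)\rhd b=\lambda_a^n(b)$. An isomorphism of power quandles is a bijection preserving $\rhd$, all $\pi^n$ and $e$. For a group $G$, $\mathrm{Pq}(G)$ is the power quandle on the underlying set of $G$ with $a\rhd b=aba^{-1}$, $\pi^n(a)=a^n$, and $e$ the identity element. $\mathrm{Z}(G)$ denotes the center of $G$. *)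

theory Defs
  imports "HOL-Algebra.Algebra" "HOL-Library.Equipollence"
begin

definition grp_center :: "('a, 'b) monoid_scheme \<Rightarrow> 'a set" where
  "grp_center G = {z \<in> carrier G. \<forall>x \<in> carrier G. z \<otimes>\<^bsub>G\<^esub> x = x \<otimes>\<^bsub>G\<^esub> z}"

text \<open>Isomorphism of power quandles Pq(G) -> Pq(H): a bijection of the carriers
  preserving conjugation a |> b = a b a^-1, all integer powers pi^n(a) = a^n,
  and the identity element.\<close>
definition pq_iso :: "('a, 'c) monoid_scheme \<Rightarrow> ('b, 'd) monoid_scheme \<Rightarrow> ('a \<Rightarrow> 'b) \<Rightarrow> bool" where
  "pq_iso G H f \<longleftrightarrow>
     bij_betw f (carrier G) (carrier H) \<and>
     (\<forall>a \<in> carrier G. \<forall>b \<in> carrier G.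
        f (a \<otimes>\<^bsub>G\<^esub> b \<otimes>\<^bsub>G\<^esub> inv\<^bsub>G\<^esub> a)
          = f a \<otimes>\<^bsub>H\<^esub> f b \<otimes>\<^bsub>H\<^esub> inv\<^bsub>H\<^esub> (f a)) \<and>
     (\<forall>a \<in> carrier G. \<forall>n::int. f (a [^]\<^bsub>G\<^esub> n) = f a [^]\<^bsub>H\<^esub> n) \<and>
     f \<one>\<^bsub>G\<^esub> = \<one>\<^bsub>H\<^esub>"

definition pq_isomorphic :: "('a, 'c) monoid_scheme \<Rightarrow> ('b, 'd) monoid_scheme \<Rightarrow> bool" where
  "pq_isomorphic G H \<longleftrightarrow> (\<exists>f. pq_iso G H f)"

end

theory Submission
  imports Defs "HOL-Computational_Algebra.Primes"
begin

context comm_group begin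

lemma coprime_ord_mult:
  assumes x: "x \<in> carrier G" and y: "y \<in> carrier G" and cop: "coprime (ord x) (ord y)"
  shows "ord (x \<otimes> y) = ord x * ord y"
proof (rule dvd_antisym)
  show "ord (x \<otimes> y) dvd ord x * ord y" using abelian_ord_mul_divides x y by blast
  define k where "k = ord (x \<otimes> y)"
  have "(x \<otimes> y) [^] k = \<one>" using x y k_def by simp
  hence e: "x [^] k \<otimes> y [^] k = \<one>" using x y by (simp add: nat_pow_distrib m_comm)
  have "x [^] (k * ord y) = \<one>"
  proof -
    have "(x [^] k \<otimes> y [^] k) [^] ord y = \<one>" using e by simp
    hence 1: "x [^] (k * ord y) \<otimes> y [^] (k * ord y) = \<one>" using x y
      by (simp add: nat_pow_distrib nat_pow_pow)
    have "y [^] (k * ord y) = \<one>" using y by (simp add: pow_eq_id)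
    thus ?thesis using 1 x by simp
  qed
  hence d1: "ord x dvd k * ord y" using x pow_eq_id by blast
  have "y [^] (k * ord x) = \<one>"
  proof -
    have "(x [^] k \<otimes> y [^] k) [^] ord x = \<one>" using e by simp
    hence 1: "x [^] (k * ord x) \<otimes> y [^] (k * ord x) = \<one>" using x y
      by (simp add: nat_pow_distrib nat_pow_pow)
    have "x [^] (k * ord x) = \<one>" using x by (simp add: pow_eq_id)
    thus ?thesis using 1 y by simp
  qed
  hence d2: "ord y dvd k * ord x" using y pow_eq_id by blast
  have "ord x dvd k" using d1 cop coprime_dvd_mult_left_iff by blast
  moreover have "ord y dvd k" using d2 cop coprime_dvd_mult_left_iff coprime_commute by blast
  ultimately show "ord x * ord y dvd k" using cop divides_mult by blast
qed

lemma max_ord_exponent: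
  assumes fin: "finite (carrier G)" and a: "a \<in> carrier G"
    and mx: "\<And>x. x \<in> carrier G \<Longrightarrow> ord x \<le> ord a"
    and x: "x \<in> carrier G"
  shows "x [^] ord a = \<one>"
proof (rule ccontr)
  assume "x [^] ord a \<noteq> \<one>"
  hence nd: "\<not> ord x dvd ord a" using x pow_eq_id by blast
  define n where "n = ord x"
  define m where "m = ord a"
  have n0: "n \<noteq> 0" using ord_ge_1[OF fin x] n_def by simp
  have m0: "m \<noteq> 0" using ord_ge_1[OF fin a] m_def by simp
  obtain p where p: "Factorial_Ring.prime p" and pm: "multiplicity p m < multiplicity p n"
  proof (rule ccontr)
    assume "\<not> thesis"
    hence "\<And>p. Factorial_Ring.prime p \<Longrightarrow> multiplicity p n \<le> multiplicity p m" using that not_le_imp_less by blast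
    hence "n dvd m" using multiplicity_le_imp_dvd[OF n0] by blast
    thus False using nd n_def m_def by simp
  qed
  define e where "e = multiplicity p n"
  define s where "s = multiplicity p m"
  obtain m1 where m1: "m = p ^ s * m1" "\<not> p dvd m1" using multiplicity_decompose'[of m p] s_def m0 p not_prime_unit by blast
  have pen: "p ^ e dvd n" using multiplicity_dvd e_def by blast
  then obtain n1 where n1: "n = p ^ e * n1" by blast
  have n1p: "n1 \<noteq> 0" using n0 n1 by auto
  have m1p: "m1 \<noteq> 0" using m0 m1 by auto
  have pp: "p \<noteq> 0" using p by auto
  define x' where "x' = x [^] n1"
  define a' where "a' = a [^] (p ^ s)"
  have ox: "ord x' = p ^ e"
    using ord_pow[OF x, of n1] n1 n_def n1p x'_def pp by simp
  have oa: "ord a' = m1"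
    using ord_pow[OF a, of "p ^ s"] m1 m_def pp a'_def by simp
  have cop: "coprime (p ^ e) m1"
    using m1(2) p by (simp add: prime_imp_coprime coprime_power_left_iff)
  have "ord (x' \<otimes> a') = p ^ e * m1"
    using coprime_ord_mult[of x' a'] ox oa cop x a x'_def a'_def by simp
  moreover have "p ^ s < p ^ e" using pm e_def s_def p prime_gt_1_nat by (simp add: power_strict_increasing)
  hence "m < p ^ e * m1" using m1 m1p by simp
  moreover have "ord (x' \<otimes> a') \<le> m" using mx[of "x' \<otimes> a'"] x a x'_def a'_def m_def by simp
  ultimately show False by simp
qed

end

context comm_group begin

lemma gcd_pow_in:
  assumes K: "subgroup K G" and x: "x \<in> carrier G"
    and i: "x [^] (i::int) \<in> K" and j: "x [^] (j::int) \<in> K"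
  shows "x [^] (gcd i j) \<in> K"
proof -
  obtain u v where uv: "u * i + v * j = gcd i j" using bezout_int by blast
  have "x [^] (gcd i j) = (x [^] i) [^] u \<otimes> (x [^] j) [^] v"
    using x uv[symmetric] by (simp add: int_pow_pow int_pow_mult mult.commute)
  also have "\<dots> \<in> K" using K i j
    by (simp add: subgroup.m_closed subgroup_int_pow_closed)
  finally show ?thesis .
qed

lemma subgroup_adjoin:
  assumes Csub: "subgroup C G" and wG: "w \<in> carrier G"
  shows "subgroup {x. \<exists>c\<in>C. \<exists>j::int. x = c \<otimes> w [^] j} G" (is "subgroup ?C' G")
proof
  have CG: "\<And>c. c \<in> C \<Longrightarrow> c \<in> carrier G" using Csub subgroup.subset by auto
  show "?C' \<subseteq> carrier G"
    using CG wG by auto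
next
  fix x1 x2 assume "x1 \<in> ?C'" "x2 \<in> ?C'"
  then obtain c1 c2 and j1 j2 :: int where c: "c1 \<in> C" "c2 \<in> C" "x1 = c1 \<otimes> w [^] j1" "x2 = c2 \<otimes> w [^] j2"
    by auto
  have cg: "c1 \<in> carrier G" "c2 \<in> carrier G" using c Csub subgroup.subset by auto
  have wj: "w [^] j1 \<in> carrier G" "w [^] j2 \<in> carrier G" using wG by auto
  have "x1 \<otimes> x2 = c1 \<otimes> (w [^] j1 \<otimes> (c2 \<otimes> w [^] j2))" using c cg wj by (simp add: m_assoc)
  also have "\<dots> = c1 \<otimes> (c2 \<otimes> (w [^] j1 \<otimes> w [^] j2))" using cg wj by (simp add: m_lcomm)
  also have "\<dots> = (c1 \<otimes> c2) \<otimes> w [^] (j1 + j2)" using cg wj wG by (simp add: m_assoc int_pow_mult)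
  finally have e: "x1 \<otimes> x2 = (c1 \<otimes> c2) \<otimes> w [^] (j1 + j2)" .
  have "c1 \<otimes> c2 \<in> C" using c(1,2) by (rule subgroup.m_closed[OF Csub])
  thus "x1 \<otimes> x2 \<in> ?C'" using e by auto
next
  have "\<one> = \<one> \<otimes> w [^] (0::int)" by simp
  moreover have "\<one> \<in> C" using subgroup.one_closed[OF Csub] .
  ultimately show "\<one> \<in> ?C'" unfolding mem_Collect_eq by (intro bexI[of _ "\<one>"] exI[of _ "0::int"])
next
  fix x1 assume "x1 \<in> ?C'"
  then obtain c1 and j1 :: int where c: "c1 \<in> C" "x1 = c1 \<otimes> w [^] j1"
    by auto
  have cg: "c1 \<in> carrier G" using c Csub subgroup.subset by auto
  have "inv x1 = inv c1 \<otimes> inv (w [^] j1)"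
    using c cg wG by (simp add: inv_mult)
  also have "inv (w [^] j1) = w [^] (- j1)" using wG by (simp add: int_pow_neg)
  finally have e: "inv x1 = inv c1 \<otimes> w [^] (- j1)" .
  have "inv c1 \<in> C" using c(1) by (rule subgroup.m_inv_closed[OF Csub])
  thus "inv x1 \<in> ?C'" using e by auto
qed

lemma complement_exists:
  assumes fin: "finite (carrier G)" and a: "a \<in> carrier G"
    and ex: "\<And>x. x \<in> carrier G \<Longrightarrow> x [^] ord a = \<one>"
  shows "\<exists>C. subgroup C G \<and> range (\<lambda>i::int. a [^] i) \<inter> C = {\<one>}
             \<and> range (\<lambda>i::int. a [^] i) <#> C = carrier G"
proof -
  define P where "P = range (\<lambda>i::int. a [^] i)"
  define m where "m = ord a"
  have Psub: "subgroup P G" using subgroup_of_powers[OF a] P_def by simp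
  define S where "S = {C. subgroup C G \<and> P \<inter> C \<subseteq> {\<one>}}"
  have Sfin: "finite S"
  proof -
    have "S \<subseteq> Pow (carrier G)" using S_def subgroup.subset by blast
    thus ?thesis using fin finite_subset by blast
  qed
  have S1: "{\<one>} \<in> S" using S_def triv_subgroup by blast
  define M where "M = Max (card ` S)"
  have "M \<in> card ` S" unfolding M_def using Sfin S1 by (intro Max_in) auto
  then obtain C where CS: "C \<in> S" and CM: "card C = M" by blast
  have Cmax: "\<And>C'. C' \<in> S \<Longrightarrow> card C' \<le> card C"
    using CM M_def Sfin by simp
  have Csub: "subgroup C G" and PC: "P \<inter> C \<subseteq> {\<one>}" using CS S_def by auto
  define K where "K = P <#> C"
  have Ksub: "subgroup K G" using mult_subgroups Psub Csub K_def by blast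
  have CK: "C \<subseteq> K"
  proof
    fix c assume "c \<in> C"
    hence "\<one> \<otimes> c \<in> K" using K_def Psub unfolding set_mult_def
      using subgroup.one_closed by fastforce
    thus "c \<in> K" using \<open>c \<in> C\<close> Csub subgroup.subset by fastforce
  qed
  have PK: "P \<subseteq> K"
  proof
    fix c assume "c \<in> P"
    hence "c \<otimes> \<one> \<in> K" using K_def Csub unfolding set_mult_def
      using subgroup.one_closed by fastforce
    thus "c \<in> K" using \<open>c \<in> P\<close> Psub subgroup.subset by fastforce
  qed
  have KG: "K = carrier G"
  proof (rule ccontr)
    assume "K \<noteq> carrier G"
    then obtain y0 where y0: "y0 \<in> carrier G" "y0 \<notin> K" using Ksub subgroup.subset by blast
    define Q where "Q = (\<lambda>r::nat. \<exists>y\<in>carrier G. y \<notin> K \<and> 0 < r \<and> y [^] r \<in> C)"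
    have Q0: "Q (order G)"
    proof -
      have "y0 [^] order G = \<one>" using y0 pow_order_eq_1 by blast
      moreover have "0 < order G" using fin order_gt_0_iff_finite by blast
      ultimately show ?thesis using Q_def y0 Csub subgroup.one_closed by fastforce
    qed
    define r where "r = (LEAST r. Q r)"
    have Qr: "Q r" using LeastI[of Q, OF Q0] r_def by simp
    have rmin: "\<And>r'. Q r' \<Longrightarrow> r \<le> r'" using Least_le r_def by blast
    obtain y where y: "y \<in> carrier G" "y \<notin> K" "0 < r" "y [^] r \<in> C" using Qr Q_def by blast
    have r1: "r \<noteq> 1" using y CK by auto
    obtain p where p: "Factorial_Ring.prime p" "p dvd r" using prime_factor_nat[OF r1] by blast
    have p1: "p > 1" using p prime_gt_1_nat by blast
    have ypK: "y [^] p \<in> K"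
    proof (rule ccontr)
      assume nk: "y [^] p \<notin> K"
      obtain q where q: "r = p * q" using p by blast
      have q0: "0 < q" using q y by (simp add: gr0I)
      have "(y [^] p) [^] q \<in> C" using q y by (simp add: nat_pow_pow)
      hence "Q q" using Q_def nk q0 y by auto
      hence "r \<le> q" using rmin by blast
      thus False using q q0 p1 by simp
    qed
    then obtain u c where uP: "u \<in> P" and cC: "c \<in> C" and yp: "y [^] p = u \<otimes> c"
      using K_def unfolding set_mult_def by blast
    obtain t :: int where ut: "u = a [^] t" using uP P_def by blast
    have cG: "c \<in> carrier G" using cC Csub subgroup.subset by blast
    have pm: "p dvd m"
    proof (rule ccontr)
      assume "\<not> p dvd m"
      hence cop: "coprime p m" using p prime_imp_coprime_nat by blast
      have "y [^] (int p) \<in> K" using ypK by (simp add: int_pow_int)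
      moreover have "y [^] (int m) \<in> K" using ex[OF y(1)] m_def Ksub subgroup.one_closed
        by (simp add: int_pow_int)
      ultimately have "y [^] (gcd (int p) (int m)) \<in> K" using gcd_pow_in[OF Ksub y(1)] by blast
      hence "y [^] (1::int) \<in> K" using cop by (simp add: coprime_iff_gcd_eq_1)
      thus False using y by simp
    qed
    then obtain q where q: "m = p * q" by blast
    have q0: "q > 0" using q ord_ge_1[OF fin a] m_def by (simp add: gr0I)
    have "\<one> = y [^] (int m)" using ex[OF y(1)] m_def by (simp add: int_pow_int)
    also have "\<dots> = (y [^] (int p)) [^] (int q)" using q y(1) by (simp add: int_pow_pow)
    also have "\<dots> = (u \<otimes> c) [^] (int q)" using yp by (simp add: int_pow_int)
    also have "\<dots> = u [^] (int q) \<otimes> c [^] (int q)" using uP cG ut a by (simp add: int_pow_distrib)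
    finally have e1: "\<one> = u [^] (int q) \<otimes> c [^] (int q)" .
    have uG: "u \<in> carrier G" using ut a by simp
    have "u [^] (int q) = inv (c [^] (int q))"
      using e1 uG cG by (metis int_pow_closed inv_equality)
    hence "u [^] (int q) \<in> C" using cC Csub
      by (simp add: subgroup.m_inv_closed subgroup_int_pow_closed)
    moreover have "u [^] (int q) \<in> P" using ut a P_def by (simp add: int_pow_pow)
    ultimately have "u [^] (int q) = \<one>" using PC by blast
    hence "a [^] (t * int q) = \<one>" using ut a by (simp add: int_pow_pow)
    hence "int m dvd t * int q" using a m_def int_pow_eq_id by blast
    hence "int p * int q dvd t * int q" using q by simp
    hence "int p dvd t" using q0 by (simp add: mult.commute)
    then obtain t' where t': "t = int p * t'" by blast
    define w where "w = y \<otimes> inv (a [^] t')"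
    have wG: "w \<in> carrier G" using w_def y a by simp
    have wp: "w [^] (int p) = c"
    proof -
      have "w [^] (int p) = y [^] (int p) \<otimes> inv (a [^] t') [^] (int p)"
        using w_def y a by (simp add: int_pow_distrib)
      also have "\<dots> = u \<otimes> c \<otimes> inv (a [^] t)"
      proof -
        have "inv (a [^] t') [^] (int p) = inv ((a [^] t') [^] (int p))"
          using a by (intro int_pow_inv) simp
        also have "\<dots> = inv (a [^] t)" using a t' by (simp only: int_pow_pow mult.commute)
        finally show ?thesis using yp by (simp only: int_pow_int)
      qed
      also have "\<dots> = c"
      proof -
        have "u \<otimes> c \<otimes> inv (a [^] t) = u \<otimes> c \<otimes> inv u" using ut by simp
        also have "\<dots> = c \<otimes> u \<otimes> inv u" using uG cG m_comm[of u c] by simp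
        also have "\<dots> = c" using uG cG by (simp add: m_assoc)
        finally show ?thesis .
      qed
      finally show ?thesis .
    qed
    have aK: "a [^] t' \<in> K"
    proof -
      have "a [^] t' \<in> P" unfolding P_def by (rule rangeI)
      thus ?thesis using PK by (rule subsetD[rotated])
    qed
    have wy: "w \<otimes> a [^] t' = y"
    proof -
      have aG: "a [^] t' \<in> carrier G" using a by simp
      show ?thesis unfolding w_def using aG y(1) by (simp add: m_assoc)
    qed
    have wK: "w \<notin> K"
    proof
      assume wK0: "w \<in> K"
      have "w \<otimes> a [^] t' \<in> K" by (rule subgroup.m_closed[OF Ksub wK0 aK])
      thus False using wy y(2) by simp
    qed
    define C' where "C' = {x. \<exists>c\<in>C. \<exists>j::int. x = c \<otimes> w [^] j}"
    have memC': "\<And>x. x \<in> C' \<longleftrightarrow> (\<exists>c\<in>C. \<exists>j::int. x = c \<otimes> w [^] j)"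
      unfolding C'_def by simp
    have CG: "\<And>c. c \<in> C \<Longrightarrow> c \<in> carrier G" using Csub subgroup.subset by auto
    have C'sub: "subgroup C' G" unfolding C'_def by (rule subgroup_adjoin[OF Csub wG])
    have CC': "C \<subseteq> C'"
    proof
      fix x assume x: "x \<in> C"
      hence "x = x \<otimes> w [^] (0::int)" using CG by simp
      thus "x \<in> C'" unfolding C'_def mem_Collect_eq using x by (intro bexI[of _ x] exI[of _ "0::int"])
    qed
    have wC': "w \<in> C'"
    proof -
      have "w = \<one> \<otimes> w [^] (1::int)" using wG by simp
      moreover have "\<one> \<in> C" using subgroup.one_closed[OF Csub] .
      ultimately show ?thesis unfolding C'_def mem_Collect_eq by (intro bexI[of _ "\<one>"] exI[of _ "1::int"])
    qed
    have wC: "w \<notin> C" using wK CK by blast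
    have PC': "P \<inter> C' \<subseteq> {\<one>}"
    proof
      fix z assume z: "z \<in> P \<inter> C'"
      then obtain c1 and j :: int where c: "c1 \<in> C" "z = c1 \<otimes> w [^] j" unfolding C'_def by auto
      have c1G: "c1 \<in> carrier G" using c Csub subgroup.subset by auto
      define s where "s = j mod int p"
      define d where "d = j div int p"
      have jsd: "j = int p * d + s" using s_def d_def by simp
      have wj: "w [^] j = c [^] d \<otimes> w [^] s"
      proof -
        have "w [^] j = w [^] (int p * d) \<otimes> w [^] s" using jsd wG by (simp add: int_pow_mult)
        also have "w [^] (int p * d) = c [^] d" using wG wp by (simp only: int_pow_pow[symmetric])
        finally show ?thesis .
      qed
      have cdC: "c [^] d \<in> C" using cC Csub subgroup_int_pow_closed by blast
      have cdG: "c [^] d \<in> carrier G" using cG by simp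
      have zG: "z \<in> carrier G" using z Psub subgroup.subset by blast
      have ws: "w [^] s = inv (c1 \<otimes> c [^] d) \<otimes> z"
      proof -
        have wsG: "w [^] s \<in> carrier G" using wG by simp
        have "z = (c1 \<otimes> c [^] d) \<otimes> w [^] s" using c wj c1G cdG wsG by (simp add: m_assoc)
        moreover have XG: "c1 \<otimes> c [^] d \<in> carrier G" using c1G cdG by simp
        ultimately show ?thesis using wsG zG by (simp add: inv_solve_left)
      qed
      have zK: "z \<in> K" using z PK by auto
      have X: "c1 \<otimes> c [^] d \<in> C" by (rule subgroup.m_closed[OF Csub c(1) cdC])
      have "inv (c1 \<otimes> c [^] d) \<in> C" by (rule subgroup.m_inv_closed[OF Csub X])
      hence "inv (c1 \<otimes> c [^] d) \<in> K" using CK by auto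
      hence wsK: "w [^] s \<in> K" unfolding ws by (rule subgroup.m_closed[OF Ksub _ zK])
      have s0: "s = 0"
      proof (rule ccontr)
        assume sn: "s \<noteq> 0"
        have sr: "0 \<le> s" "s < int p" using s_def p1 by auto
        obtain s' where s': "s = int s'" using sr(1) nonneg_int_cases by blast
        have "\<not> p dvd s'" using sn sr s' by (auto dest: dvd_imp_le)
        hence "coprime p s'" using p prime_imp_coprime_nat by blast
        hence g1: "gcd s (int p) = 1" using s' by (simp add: coprime_iff_gcd_eq_1 gcd.commute)
        have "w [^] (int p) \<in> K" using wp cC CK by blast
        hence "w [^] (gcd s (int p)) \<in> K" using gcd_pow_in[OF Ksub wG wsK] by blast
        hence "w \<in> K" using g1 wG by simp
        thus False using wK by simp
      qed
      have "z = c1 \<otimes> c [^] d" using c wj s0 cdG by simp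
      hence "z \<in> C" using X by simp
      thus "z \<in> {\<one>}" using z PC by auto
    qed
    have "C' \<in> S" using S_def C'sub PC' by blast
    hence "card C' \<le> card C" using Cmax by blast
    moreover have "finite C'" using C'sub fin subgroup.subset finite_subset by blast
    ultimately have "C' = C" using CC' card_seteq by blast
    thus False using wC wC' by simp
  qed
  have "P \<inter> C = {\<one>}" using PC Psub Csub subgroup.one_closed by blast
  thus ?thesis using Csub KG K_def P_def by blast
qed

end

definition tors :: "('a, 'c) monoid_scheme \<Rightarrow> nat \<Rightarrow> 'a set" where
  "tors A k = {x \<in> carrier A. x [^]\<^bsub>A\<^esub> k = \<one>\<^bsub>A\<^esub>}"

context comm_group begin

lemma tors_split:
  assumes fin: "finite (carrier G)" and PS: "subgroup P G" and CS: "subgroup C G"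
    and PC: "P \<inter> C = {\<one>}" and PCG: "P <#> C = carrier G"
  shows "card (tors G k) = card {x\<in>P. x [^] k = \<one>} * card {y\<in>C. y [^] k = \<one>}"
proof -
  interpret D: group_disjoint_sum G P C
    using PS CS by (simp add: group_disjoint_sum_def is_group)
  have "(\<lambda>(x,y). x \<otimes> y) \<in> iso (DirProd (subgroup_generated G P) (subgroup_generated G C)) G"
    using D.iso_group_mul[OF comm_group_axioms] PC PCG by simp
  hence inj: "inj_on (\<lambda>(x,y). x \<otimes> y) (P \<times> C)"
    using PS CS by (simp add: iso_iff subgroup.carrier_subgroup_generated_subgroup)
  define TP where "TP = {x\<in>P. x [^] k = \<one>}"
  define TC where "TC = {y\<in>C. y [^] k = \<one>}"
  have PG: "\<And>x. x \<in> P \<Longrightarrow> x \<in> carrier G" using PS subgroup.subset by auto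
  have CG: "\<And>x. x \<in> C \<Longrightarrow> x \<in> carrier G" using CS subgroup.subset by auto
  have img: "(\<lambda>(x,y). x \<otimes> y) ` (TP \<times> TC) = tors G k"
  proof
    show "(\<lambda>(x,y). x \<otimes> y) ` (TP \<times> TC) \<subseteq> tors G k"
    proof
      fix z assume "z \<in> (\<lambda>(x,y). x \<otimes> y) ` (TP \<times> TC)"
      then obtain x y where xy: "x \<in> TP" "y \<in> TC" "z = x \<otimes> y" by auto
      have xg: "x \<in> carrier G" "y \<in> carrier G" using xy PG CG TP_def TC_def by auto
      have "z [^] k = x [^] k \<otimes> y [^] k" using xy xg by (simp add: nat_pow_distrib)
      also have "\<dots> = \<one>" using xy TP_def TC_def by simp
      finally show "z \<in> tors G k" unfolding tors_def using xy xg by simp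
    qed
  next
    show "tors G k \<subseteq> (\<lambda>(x,y). x \<otimes> y) ` (TP \<times> TC)"
    proof
      fix z assume z: "z \<in> tors G k"
      hence zG: "z \<in> carrier G" and zk: "z [^] k = \<one>" unfolding tors_def by auto
      have "z \<in> P <#> C" using zG PCG by simp
      then obtain x y where xy: "x \<in> P" "y \<in> C" "z = x \<otimes> y" unfolding set_mult_def by auto
      have xg: "x \<in> carrier G" "y \<in> carrier G" using xy PG CG by auto
      have "x [^] k \<otimes> y [^] k = \<one>" using zk xy xg by (simp add: nat_pow_distrib)
      hence e: "x [^] k = inv (y [^] k)" using xg by (simp add: inv_equality)
      have "x [^] k \<in> P" using subgroup_int_pow_closed[OF PS xy(1), of "int k"] by (simp add: int_pow_int)
      moreover have "y [^] k \<in> C" using subgroup_int_pow_closed[OF CS xy(2), of "int k"] by (simp add: int_pow_int)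
      hence "inv (y [^] k) \<in> C" using CS by (simp add: subgroup.m_inv_closed)
      ultimately have "x [^] k \<in> P \<inter> C" using e by simp
      hence x1: "x [^] k = \<one>" using PC by auto
      hence y1: "y [^] k = \<one>" using e xg
        by (metis inv_eq_1_iff nat_pow_closed)
      have "(x, y) \<in> TP \<times> TC" using xy x1 y1 TP_def TC_def by simp
      thus "z \<in> (\<lambda>(x,y). x \<otimes> y) ` (TP \<times> TC)" using xy(3) by force
    qed
  qed
  have "TP \<times> TC \<subseteq> P \<times> C" using TP_def TC_def by auto
  hence "inj_on (\<lambda>(x,y). x \<otimes> y) (TP \<times> TC)" using inj inj_on_subset by blast
  hence "card (tors G k) = card (TP \<times> TC)" using img card_image by fastforce
  also have "\<dots> = card TP * card TC" by (rule card_cartesian_product)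
  finally show ?thesis using TP_def TC_def by simp
qed

lemma cyc_eq:
  assumes fin: "finite (carrier G)" and a: "a \<in> carrier G"
  shows "range (\<lambda>i::int. a [^] i) = (\<lambda>i::nat. a [^] i) ` {..<ord a}"
proof
  have m0: "ord a > 0" using ord_ge_1[OF fin a] by simp
  show "range (\<lambda>i::int. a [^] i) \<subseteq> (\<lambda>i::nat. a [^] i) ` {..<ord a}"
  proof
    fix x assume "x \<in> range (\<lambda>i::int. a [^] i)"
    then obtain i :: int where x: "x = a [^] i" by auto
    define j where "j = nat (i mod int (ord a))"
    have jl: "j < ord a" using m0 j_def by (simp add: nat_less_iff)
    have ij: "int j = i mod int (ord a)" using m0 j_def by simp
    have "int (ord a) dvd (int j - i)"
      using mod_eq_dvd_iff[of "i mod int (ord a)" "int (ord a)" i] ij by simp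
    hence "a [^] i = a [^] (int j)" using int_pow_eq[OF a] by blast
    hence "x = a [^] j" using x by (simp add: int_pow_int)
    thus "x \<in> (\<lambda>i::nat. a [^] i) ` {..<ord a}" using jl by auto
  qed
next
  show "(\<lambda>i::nat. a [^] i) ` {..<ord a} \<subseteq> range (\<lambda>i::int. a [^] i)"
  proof
    fix x assume "x \<in> (\<lambda>i::nat. a [^] i) ` {..<ord a}"
    then obtain j :: nat where "x = a [^] j" by auto
    hence "x = a [^] (int j)" by (simp add: int_pow_int)
    thus "x \<in> range (\<lambda>i::int. a [^] i)" by auto
  qed
qed

lemma cyc_tors_card:
  assumes fin: "finite (carrier G)" and a: "a \<in> carrier G"
  shows "card {x \<in> range (\<lambda>i::int. a [^] i). x [^] k = \<one>} = card {i \<in> {..<ord a}. ord a dvd i * k}"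
proof -
  have m0: "ord a > 0" using ord_ge_1[OF fin a] by simp
  have inj: "inj_on (\<lambda>i::nat. a [^] i) {..<ord a}"
  proof -
    have "{..<ord a} = {0..ord a - 1}" using m0 by auto
    thus ?thesis using ord_inj[OF a] by simp
  qed
  have "{x \<in> range (\<lambda>i::int. a [^] i). x [^] k = \<one>} = (\<lambda>i::nat. a [^] i) ` {i \<in> {..<ord a}. ord a dvd i * k}"
  proof -
    have "\<And>i. (a [^] i) [^] k = \<one> \<longleftrightarrow> ord a dvd i * k"
      using a by (simp add: nat_pow_pow pow_eq_id)
    thus ?thesis unfolding cyc_eq[OF fin a] by auto
  qed
  moreover have "inj_on (\<lambda>i::nat. a [^] i) {i \<in> {..<ord a}. ord a dvd i * k}"
    using inj by (rule inj_on_subset) auto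
  ultimately show ?thesis by (simp add: card_image)
qed

end

lemma sg_eq:
  assumes "subgroup H G"
  shows "subgroup_generated G H = G\<lparr>carrier := H\<rparr>"
proof -
  have "carrier (subgroup_generated G H) = H"
    using subgroup.carrier_subgroup_generated_subgroup[OF assms] .
  hence "generate G (carrier G \<inter> H) = H" by (simp add: subgroup_generated_def)
  thus ?thesis by (simp add: subgroup_generated_def)
qed

lemma cyc_iso:
  assumes A: "group A" and B: "group B" and a: "a \<in> carrier A" and b: "b \<in> carrier B"
    and o: "group.ord A a = group.ord B b"
  shows "A\<lparr>carrier := range (\<lambda>i::int. a [^]\<^bsub>A\<^esub> i)\<rparr> \<cong> B\<lparr>carrier := range (\<lambda>i::int. b [^]\<^bsub>B\<^esub> i)\<rparr>"
proof -
  interpret A: group A by (rule A)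
  interpret B: group B by (rule B)
  define h where "h x = b [^]\<^bsub>B\<^esub> (SOME i::int. x = a [^]\<^bsub>A\<^esub> i)" for x
  have hA: "h (a [^]\<^bsub>A\<^esub> i) = b [^]\<^bsub>B\<^esub> i" for i :: int
  proof -
    define j where "j = (SOME j::int. a [^]\<^bsub>A\<^esub> i = a [^]\<^bsub>A\<^esub> j)"
    have "a [^]\<^bsub>A\<^esub> i = a [^]\<^bsub>A\<^esub> j" unfolding j_def by (rule someI[of _ i]) simp
    hence "int (A.ord a) dvd (j - i)" using A.int_pow_eq[OF a] by simp
    hence "int (B.ord b) dvd (j - i)" using o by simp
    hence "b [^]\<^bsub>B\<^esub> i = b [^]\<^bsub>B\<^esub> j" using B.int_pow_eq[OF b] by simp
    thus ?thesis unfolding h_def j_def by simp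
  qed
  have "h \<in> iso (A\<lparr>carrier := range (\<lambda>i::int. a [^]\<^bsub>A\<^esub> i)\<rparr>) (B\<lparr>carrier := range (\<lambda>i::int. b [^]\<^bsub>B\<^esub> i)\<rparr>)"
    unfolding iso_def hom_def
  proof (intro CollectI conjI)
    show "h \<in> carrier (A\<lparr>carrier := range (\<lambda>i::int. a [^]\<^bsub>A\<^esub> i)\<rparr>) \<rightarrow> carrier (B\<lparr>carrier := range (\<lambda>i::int. b [^]\<^bsub>B\<^esub> i)\<rparr>)"
      using hA by auto
    show "\<forall>x\<in>carrier (A\<lparr>carrier := range (\<lambda>i::int. a [^]\<^bsub>A\<^esub> i)\<rparr>).
       \<forall>y\<in>carrier (A\<lparr>carrier := range (\<lambda>i::int. a [^]\<^bsub>A\<^esub> i)\<rparr>).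
          h (x \<otimes>\<^bsub>A\<lparr>carrier := range (\<lambda>i::int. a [^]\<^bsub>A\<^esub> i)\<rparr>\<^esub> y) = h x \<otimes>\<^bsub>B\<lparr>carrier := range (\<lambda>i::int. b [^]\<^bsub>B\<^esub> i)\<rparr>\<^esub> h y"
    proof (intro ballI)
      fix x y assume "x \<in> carrier (A\<lparr>carrier := range (\<lambda>i::int. a [^]\<^bsub>A\<^esub> i)\<rparr>)"
        "y \<in> carrier (A\<lparr>carrier := range (\<lambda>i::int. a [^]\<^bsub>A\<^esub> i)\<rparr>)"
      then obtain i j :: int where ij: "x = a [^]\<^bsub>A\<^esub> i" "y = a [^]\<^bsub>A\<^esub> j" by auto
      have "x \<otimes>\<^bsub>A\<^esub> y = a [^]\<^bsub>A\<^esub> (i + j)" using ij a by (simp add: A.int_pow_mult)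
      hence "h (x \<otimes>\<^bsub>A\<^esub> y) = b [^]\<^bsub>B\<^esub> i \<otimes>\<^bsub>B\<^esub> b [^]\<^bsub>B\<^esub> j"
        using hA b by (simp add: B.int_pow_mult)
      thus "h (x \<otimes>\<^bsub>A\<lparr>carrier := range (\<lambda>i::int. a [^]\<^bsub>A\<^esub> i)\<rparr>\<^esub> y) = h x \<otimes>\<^bsub>B\<lparr>carrier := range (\<lambda>i::int. b [^]\<^bsub>B\<^esub> i)\<rparr>\<^esub> h y"
        using ij hA by simp
    qed
    show "bij_betw h (carrier (A\<lparr>carrier := range (\<lambda>i::int. a [^]\<^bsub>A\<^esub> i)\<rparr>)) (carrier (B\<lparr>carrier := range (\<lambda>i::int. b [^]\<^bsub>B\<^esub> i)\<rparr>))"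
      unfolding bij_betw_def
    proof (intro conjI)
      show "inj_on h (carrier (A\<lparr>carrier := range (\<lambda>i::int. a [^]\<^bsub>A\<^esub> i)\<rparr>))"
      proof (rule inj_onI)
        fix x y assume "x \<in> carrier (A\<lparr>carrier := range (\<lambda>i::int. a [^]\<^bsub>A\<^esub> i)\<rparr>)"
          "y \<in> carrier (A\<lparr>carrier := range (\<lambda>i::int. a [^]\<^bsub>A\<^esub> i)\<rparr>)" and hxy: "h x = h y"
        then obtain i j :: int where ij: "x = a [^]\<^bsub>A\<^esub> i" "y = a [^]\<^bsub>A\<^esub> j" by auto
        have "b [^]\<^bsub>B\<^esub> i = b [^]\<^bsub>B\<^esub> j" using hxy ij hA by simp
        hence "int (B.ord b) dvd (j - i)" using B.int_pow_eq[OF b] by simp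
        hence "int (A.ord a) dvd (j - i)" using o by simp
        hence "a [^]\<^bsub>A\<^esub> i = a [^]\<^bsub>A\<^esub> j" using A.int_pow_eq[OF a] by simp
        thus "x = y" using ij by simp
      qed
      show "h ` carrier (A\<lparr>carrier := range (\<lambda>i::int. a [^]\<^bsub>A\<^esub> i)\<rparr>) = carrier (B\<lparr>carrier := range (\<lambda>i::int. b [^]\<^bsub>B\<^esub> i)\<rparr>)"
      proof
        show "h ` carrier (A\<lparr>carrier := range (\<lambda>i::int. a [^]\<^bsub>A\<^esub> i)\<rparr>) \<subseteq> carrier (B\<lparr>carrier := range (\<lambda>i::int. b [^]\<^bsub>B\<^esub> i)\<rparr>)"
          using hA by auto
        show "carrier (B\<lparr>carrier := range (\<lambda>i::int. b [^]\<^bsub>B\<^esub> i)\<rparr>) \<subseteq> h ` carrier (A\<lparr>carrier := range (\<lambda>i::int. a [^]\<^bsub>A\<^esub> i)\<rparr>)"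
        proof
          fix y assume "y \<in> carrier (B\<lparr>carrier := range (\<lambda>i::int. b [^]\<^bsub>B\<^esub> i)\<rparr>)"
          then obtain i :: int where "y = b [^]\<^bsub>B\<^esub> i" by auto
          hence "y = h (a [^]\<^bsub>A\<^esub> i)" using hA by simp
          thus "y \<in> h ` carrier (A\<lparr>carrier := range (\<lambda>i::int. a [^]\<^bsub>A\<^esub> i)\<rparr>)" by auto
        qed
      qed
    qed
  qed
  thus ?thesis unfolding is_iso_def by auto
qed

lemma triv_iso:
  assumes "carrier A = {\<one>\<^bsub>A\<^esub>}" and "carrier B = {\<one>\<^bsub>B\<^esub>}" and "monoid A" and "monoid B"
  shows "A \<cong> B"
proof -
  have "(\<lambda>_. \<one>\<^bsub>B\<^esub>) \<in> iso A B"
    unfolding iso_def hom_def bij_betw_def using assms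
    by (auto simp: inj_on_def monoid.r_one)
  thus ?thesis unfolding is_iso_def by auto
qed

lemma tors_sub:
  assumes "subgroup C A"
  shows "tors (A\<lparr>carrier := C\<rparr>) k = {x \<in> C. x [^]\<^bsub>A\<^esub> k = \<one>\<^bsub>A\<^esub>}"
  unfolding tors_def by (simp add: nat_pow_def)

lemma comm_sub:
  assumes "comm_group A" "subgroup C A"
  shows "comm_group (A\<lparr>carrier := C\<rparr>)"
proof -
  interpret comm_group A by (rule assms(1))
  have "comm_group (subgroup_generated A C)" using abelian_subgroup_generated[OF assms(1)] .
  thus ?thesis using sg_eq[OF assms(2)] by simp
qed

lemma exists_max_ord:
  assumes "group A" "finite (carrier A)"
  obtains a where "a \<in> carrier A" "\<And>x. x \<in> carrier A \<Longrightarrow> group.ord A x \<le> group.ord A a"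
proof -
  interpret group A by (rule assms(1))
  have ne: "group.ord A ` carrier A \<noteq> {}" by auto
  have "Max (ord ` carrier A) \<in> ord ` carrier A" using assms(2) ne by (intro Max_in) auto
  then obtain a where a: "a \<in> carrier A" "ord a = Max (ord ` carrier A)" by auto
  have "\<And>x. x \<in> carrier A \<Longrightarrow> ord x \<le> ord a" using a assms(2) by simp
  thus ?thesis using that a by blast
qed

lemma count_iso_aux:
  "\<forall>(A::('a,'c) monoid_scheme) (B::('b,'d) monoid_scheme). card (carrier A) = n \<longrightarrow> comm_group A \<longrightarrow> comm_group B
     \<longrightarrow> finite (carrier A) \<longrightarrow> finite (carrier B) \<longrightarrow> (\<forall>k. card (tors A k) = card (tors B k)) \<longrightarrow> A \<cong> B"
proof (induction n rule: less_induct)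
  case (less n)
  show ?case
  proof (intro allI impI)
    fix A :: "('a,'c) monoid_scheme" and B :: "('b,'d) monoid_scheme"
    assume cA: "card (carrier A) = n" and GA: "comm_group A" and GB: "comm_group B"
      and fA: "finite (carrier A)" and fB: "finite (carrier B)"
      and T: "\<forall>k. card (tors A k) = card (tors B k)"
    interpret A: comm_group A by (rule GA)
    interpret B: comm_group B by (rule GB)
    have torsfull: "\<And>k. card (tors A k) = card (carrier A) \<longleftrightarrow> tors A k = carrier A"
      using fA by (metis (no_types, lifting) card_subset_eq mem_Collect_eq subsetI tors_def)
    have torsfullB: "\<And>k. card (tors B k) = card (carrier B) \<longleftrightarrow> tors B k = carrier B"
      using fB by (metis (no_types, lifting) card_subset_eq mem_Collect_eq subsetI tors_def)
    define N where "N = card (carrier A) * card (carrier B)"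
    have tAN: "tors A N = carrier A"
    proof -
      have "\<And>x. x \<in> carrier A \<Longrightarrow> x [^]\<^bsub>A\<^esub> N = \<one>\<^bsub>A\<^esub>"
        using A.pow_order_eq_1 unfolding N_def order_def by (simp add: A.nat_pow_pow[symmetric])
      thus ?thesis unfolding tors_def by auto
    qed
    have tBN: "tors B N = carrier B"
    proof -
      have "\<And>x. x \<in> carrier B \<Longrightarrow> x [^]\<^bsub>B\<^esub> N = \<one>\<^bsub>B\<^esub>"
        using B.pow_order_eq_1 unfolding N_def order_def by (simp add: B.nat_pow_pow[symmetric] mult.commute)
      thus ?thesis unfolding tors_def by auto
    qed
    have cAB: "card (carrier A) = card (carrier B)" using T tAN tBN by metis
    show "A \<cong> B"
    proof (cases "card (carrier A) = 1")
      case True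
      obtain x where x: "carrier A = {x}" using True card_1_singleton_iff[of "carrier A"] by auto
      hence "carrier A = {\<one>\<^bsub>A\<^esub>}" using A.one_closed by auto
      moreover obtain y where y: "carrier B = {y}" using True cAB card_1_singleton_iff[of "carrier B"] by auto
      hence "carrier B = {\<one>\<^bsub>B\<^esub>}" using B.one_closed by auto
      ultimately show ?thesis by (rule triv_iso) (simp_all add: A.monoid_axioms B.monoid_axioms)
    next
      case False
      obtain a where a: "a \<in> carrier A" and amax: "\<And>x. x \<in> carrier A \<Longrightarrow> A.ord x \<le> A.ord a"
        using exists_max_ord[OF A.is_group fA] by blast
      obtain b where b: "b \<in> carrier B" and bmax: "\<And>x. x \<in> carrier B \<Longrightarrow> B.ord x \<le> B.ord b"
        using exists_max_ord[OF B.is_group fB] by blast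
      have exA: "\<And>x. x \<in> carrier A \<Longrightarrow> x [^]\<^bsub>A\<^esub> A.ord a = \<one>\<^bsub>A\<^esub>"
        using A.max_ord_exponent[OF fA a amax] .
      have exB: "\<And>x. x \<in> carrier B \<Longrightarrow> x [^]\<^bsub>B\<^esub> B.ord b = \<one>\<^bsub>B\<^esub>"
        using B.max_ord_exponent[OF fB b bmax] .
      have oa0: "A.ord a > 0" using A.ord_ge_1[OF fA a] by simp
      have ob0: "B.ord b > 0" using B.ord_ge_1[OF fB b] by simp
      have "tors A (A.ord a) = carrier A" using exA unfolding tors_def by auto
      hence "card (tors B (A.ord a)) = card (carrier B)"
      proof -
        assume h: "tors A (A.ord a) = carrier A"
        have "card (tors B (A.ord a)) = card (tors A (A.ord a))" using T by simp
        also have "\<dots> = card (carrier B)" using h cAB by simp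
        finally show ?thesis .
      qed
      hence "tors B (A.ord a) = carrier B" using torsfullB by simp
      hence "b [^]\<^bsub>B\<^esub> A.ord a = \<one>\<^bsub>B\<^esub>" using b unfolding tors_def by auto
      hence "B.ord b dvd A.ord a" using B.pow_eq_id[OF b] by simp
      hence o1: "B.ord b \<le> A.ord a" using oa0 by (simp add: dvd_imp_le)
      have "tors B (B.ord b) = carrier B" using exB unfolding tors_def by auto
      hence "card (tors A (B.ord b)) = card (carrier A)"
      proof -
        assume h: "tors B (B.ord b) = carrier B"
        have "card (tors A (B.ord b)) = card (tors B (B.ord b))" using T by simp
        also have "\<dots> = card (carrier A)" using h cAB by simp
        finally show ?thesis .
      qed
      hence "tors A (B.ord b) = carrier A" using torsfull by simp
      hence "a [^]\<^bsub>A\<^esub> B.ord b = \<one>\<^bsub>A\<^esub>" using a unfolding tors_def by auto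
      hence "A.ord a dvd B.ord b" using A.pow_eq_id[OF a] by simp
      hence "A.ord a \<le> B.ord b" using ob0 by (simp add: dvd_imp_le)
      hence oab: "A.ord a = B.ord b" using o1 by simp
      define m where "m = A.ord a"
      obtain C where CS: "subgroup C A" and PC: "range (\<lambda>i::int. a [^]\<^bsub>A\<^esub> i) \<inter> C = {\<one>\<^bsub>A\<^esub>}"
        and PCA: "range (\<lambda>i::int. a [^]\<^bsub>A\<^esub> i) <#>\<^bsub>A\<^esub> C = carrier A"
        using A.complement_exists[OF fA a exA] by auto
      obtain D where DS: "subgroup D B" and QD: "range (\<lambda>i::int. b [^]\<^bsub>B\<^esub> i) \<inter> D = {\<one>\<^bsub>B\<^esub>}"
        and QDB: "range (\<lambda>i::int. b [^]\<^bsub>B\<^esub> i) <#>\<^bsub>B\<^esub> D = carrier B"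
        using B.complement_exists[OF fB b exB] by auto
      have PS: "subgroup (range (\<lambda>i::int. a [^]\<^bsub>A\<^esub> i)) A" using A.subgroup_of_powers[OF a] .
      have QS: "subgroup (range (\<lambda>i::int. b [^]\<^bsub>B\<^esub> i)) B" using B.subgroup_of_powers[OF b] .
      have splitA: "\<And>k. card (tors A k) = card {i \<in> {..<m}. m dvd i * k} * card {y\<in>C. y [^]\<^bsub>A\<^esub> k = \<one>\<^bsub>A\<^esub>}"
        using A.tors_split[OF fA PS CS PC PCA] A.cyc_tors_card[OF fA a] m_def by simp
      have splitB: "\<And>k. card (tors B k) = card {i \<in> {..<m}. m dvd i * k} * card {y\<in>D. y [^]\<^bsub>B\<^esub> k = \<one>\<^bsub>B\<^esub>}"
        using B.tors_split[OF fB QS DS QD QDB] B.cyc_tors_card[OF fB b] m_def oab by simp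
      have m0: "m > 0" using oa0 unfolding m_def .
      have pos: "card {i \<in> {..<m}. m dvd i * k} > 0" for k
      proof -
        have "{0} \<subseteq> {i \<in> {..<m}. m dvd i * k}" using m0 by auto
        moreover have "finite {i \<in> {..<m}. m dvd i * k}" by simp
        ultimately have "card {0::nat} \<le> card {i \<in> {..<m}. m dvd i * k}" by (rule card_mono[rotated])
        thus ?thesis by simp
      qed
      have TCD: "\<And>k. card (tors (A\<lparr>carrier := C\<rparr>) k) = card (tors (B\<lparr>carrier := D\<rparr>) k)"
      proof -
        fix k
        have "card {i \<in> {..<m}. m dvd i * k} * card {y\<in>C. y [^]\<^bsub>A\<^esub> k = \<one>\<^bsub>A\<^esub>}
            = card {i \<in> {..<m}. m dvd i * k} * card {y\<in>D. y [^]\<^bsub>B\<^esub> k = \<one>\<^bsub>B\<^esub>}"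
        proof -
          have "card {i \<in> {..<m}. m dvd i * k} * card {y\<in>C. y [^]\<^bsub>A\<^esub> k = \<one>\<^bsub>A\<^esub>} = card (tors A k)"
            by (rule splitA[symmetric])
          also have "\<dots> = card (tors B k)" by (rule T[rule_format])
          also have "\<dots> = card {i \<in> {..<m}. m dvd i * k} * card {y\<in>D. y [^]\<^bsub>B\<^esub> k = \<one>\<^bsub>B\<^esub>}"
            by (rule splitB)
          finally show ?thesis .
        qed
        hence "card {y\<in>C. y [^]\<^bsub>A\<^esub> k = \<one>\<^bsub>A\<^esub>} = card {y\<in>D. y [^]\<^bsub>B\<^esub> k = \<one>\<^bsub>B\<^esub>}"
          using pos[of k] by (simp only: mult_left_cancel neq0_conv[symmetric])
        thus "card (tors (A\<lparr>carrier := C\<rparr>) k) = card (tors (B\<lparr>carrier := D\<rparr>) k)"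
          using tors_sub[OF CS] tors_sub[OF DS] by simp
      qed
      have fC: "finite C" using finite_subset[OF subgroup.subset[OF CS] fA] .
      have fD: "finite D" using finite_subset[OF subgroup.subset[OF DS] fB] .
      have cAC: "card (carrier A) = m * card C"
      proof -
        have "card (tors A 0) = card {i \<in> {..<m}. m dvd i * 0} * card {y\<in>C. y [^]\<^bsub>A\<^esub> (0::nat) = \<one>\<^bsub>A\<^esub>}"
          by (rule splitA)
        moreover have "tors A 0 = carrier A" unfolding tors_def by auto
        moreover have "{i \<in> {..<m}. m dvd i * 0} = {..<m}" by auto
        moreover have "{y\<in>C. y [^]\<^bsub>A\<^esub> (0::nat) = \<one>\<^bsub>A\<^esub>} = C" by auto
        ultimately show ?thesis by simp
      qed
      have m1: "m \<noteq> 1"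
      proof
        assume "m = 1"
        hence "\<And>x. x \<in> carrier A \<Longrightarrow> x = \<one>\<^bsub>A\<^esub>" using exA unfolding m_def by simp
        hence "carrier A = {\<one>\<^bsub>A\<^esub>}" using A.one_closed by auto
        thus False using False by simp
      qed
      have "\<one>\<^bsub>A\<^esub> \<in> C" by (rule subgroup.one_closed[OF CS])
      hence "C \<noteq> {}" by auto
      hence cC0: "card C > 0" using fC by (simp add: card_gt_0_iff)
      have m2: "m \<ge> 2" using m0 m1 by simp
      have "card C < 2 * card C" using cC0 by simp
      also have "\<dots> \<le> m * card C" using m2 by (rule mult_right_mono) simp
      finally have ltC: "card C < n" using cAC cA by simp
      have IH: "A\<lparr>carrier := C\<rparr> \<cong> B\<lparr>carrier := D\<rparr>"
        using less.IH[OF ltC] comm_sub[OF GA CS] comm_sub[OF GB DS] fC fD TCD by simp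
      have cyc: "A\<lparr>carrier := range (\<lambda>i::int. a [^]\<^bsub>A\<^esub> i)\<rparr> \<cong> B\<lparr>carrier := range (\<lambda>i::int. b [^]\<^bsub>B\<^esub> i)\<rparr>"
        using cyc_iso[OF A.is_group B.is_group a b oab] .
      interpret DA: group_disjoint_sum A "range (\<lambda>i::int. a [^]\<^bsub>A\<^esub> i)" C
        using PS CS by (simp add: group_disjoint_sum_def A.is_group)
      interpret DB: group_disjoint_sum B "range (\<lambda>i::int. b [^]\<^bsub>B\<^esub> i)" D
        using QS DS by (simp add: group_disjoint_sum_def B.is_group)
      have i1: "subgroup_generated A (range (\<lambda>i::int. a [^]\<^bsub>A\<^esub> i)) \<times>\<times> subgroup_generated A C \<cong> A"
        using DA.iso_group_mul[OF GA] PC PCA unfolding is_iso_def by auto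
      have i2: "subgroup_generated B (range (\<lambda>i::int. b [^]\<^bsub>B\<^esub> i)) \<times>\<times> subgroup_generated B D \<cong> B"
        using DB.iso_group_mul[OF GB] QD QDB unfolding is_iso_def by auto
      have gP: "group (subgroup_generated A (range (\<lambda>i::int. a [^]\<^bsub>A\<^esub> i)))" by simp
      have gC: "group (subgroup_generated A C)" by simp
      have i3: "subgroup_generated A (range (\<lambda>i::int. a [^]\<^bsub>A\<^esub> i)) \<times>\<times> subgroup_generated A C
          \<cong> subgroup_generated B (range (\<lambda>i::int. b [^]\<^bsub>B\<^esub> i)) \<times>\<times> subgroup_generated B D"
      proof -
        have cyc': "subgroup_generated A (range (\<lambda>i::int. a [^]\<^bsub>A\<^esub> i)) \<cong> subgroup_generated B (range (\<lambda>i::int. b [^]\<^bsub>B\<^esub> i))"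
          unfolding sg_eq[OF PS] sg_eq[OF QS] by (rule cyc)
        have IH': "subgroup_generated A C \<cong> subgroup_generated B D"
          unfolding sg_eq[OF CS] sg_eq[OF DS] by (rule IH)
        show ?thesis by (rule group.DirProd_iso_trans[OF gP cyc' IH'])
      qed
      have gPC: "group (subgroup_generated A (range (\<lambda>i::int. a [^]\<^bsub>A\<^esub> i)) \<times>\<times> subgroup_generated A C)"
        using DirProd_group[OF gP gC] .
      have "A \<cong> subgroup_generated A (range (\<lambda>i::int. a [^]\<^bsub>A\<^esub> i)) \<times>\<times> subgroup_generated A C"
        using group.iso_sym[OF gPC i1] .
      also have "\<dots> \<cong> subgroup_generated B (range (\<lambda>i::int. b [^]\<^bsub>B\<^esub> i)) \<times>\<times> subgroup_generated B D"
        by (rule i3)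
      also have "\<dots> \<cong> B" by (rule i2)
      finally show ?thesis .
    qed
  qed
qed

theorem count_iso:
  fixes A :: "('a,'c) monoid_scheme" and B :: "('b,'d) monoid_scheme"
  assumes "comm_group A" "comm_group B" "finite (carrier A)" "finite (carrier B)"
    and "\<And>k. card (tors A k) = card (tors B k)"
  shows "A \<cong> B"
  by (rule count_iso_aux[of "card (carrier A)", rule_format, OF refl]) (use assms in auto)

lemma (in group) center_subgroup: "subgroup (grp_center G) G"
proof
  show "grp_center G \<subseteq> carrier G" unfolding grp_center_def by auto
next
  fix x y assume x: "x \<in> grp_center G" and y: "y \<in> grp_center G"
  have xG: "x \<in> carrier G" and yG: "y \<in> carrier G" using x y unfolding grp_center_def by auto
  have "\<forall>z\<in>carrier G. x \<otimes> y \<otimes> z = z \<otimes> (x \<otimes> y)"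
  proof
    fix z assume zG: "z \<in> carrier G"
    have "x \<otimes> y \<otimes> z = x \<otimes> (y \<otimes> z)" using xG yG zG by (simp add: m_assoc)
    also have "\<dots> = x \<otimes> (z \<otimes> y)" using y zG unfolding grp_center_def by simp
    also have "\<dots> = (x \<otimes> z) \<otimes> y" using xG yG zG by (simp add: m_assoc)
    also have "\<dots> = (z \<otimes> x) \<otimes> y" using x zG unfolding grp_center_def by simp
    also have "\<dots> = z \<otimes> (x \<otimes> y)" using xG yG zG by (simp add: m_assoc)
    finally show "x \<otimes> y \<otimes> z = z \<otimes> (x \<otimes> y)" .
  qed
  thus "x \<otimes> y \<in> grp_center G" using xG yG unfolding grp_center_def by simp
next
  show "\<one> \<in> grp_center G" unfolding grp_center_def by simp
next
  fix x assume x: "x \<in> grp_center G"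
  have xG: "x \<in> carrier G" using x unfolding grp_center_def by auto
  have "\<forall>z\<in>carrier G. inv x \<otimes> z = z \<otimes> inv x"
  proof
    fix z assume zG: "z \<in> carrier G"
    have "x \<otimes> inv z = inv z \<otimes> x" using x zG unfolding grp_center_def by simp
    hence "inv (x \<otimes> inv z) = inv (inv z \<otimes> x)" by simp
    thus "inv x \<otimes> z = z \<otimes> inv x" using xG zG by (simp add: inv_mult_group)
  qed
  thus "inv x \<in> grp_center G" using xG unfolding grp_center_def by simp
qed

lemma (in group) center_comm: "comm_group (G\<lparr>carrier := grp_center G\<rparr>)"
proof -
  have g: "group (G\<lparr>carrier := grp_center G\<rparr>)" by (rule subgroup_imp_group[OF center_subgroup])
  show ?thesis
  proof (rule group.group_comm_groupI[OF g])
    fix x y assume x: "x \<in> carrier (G\<lparr>carrier := grp_center G\<rparr>)" and y: "y \<in> carrier (G\<lparr>carrier := grp_center G\<rparr>)"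
    have xc: "\<forall>w\<in>carrier G. x \<otimes> w = w \<otimes> x" using x unfolding grp_center_def by simp
    have yG: "y \<in> carrier G" using y unfolding grp_center_def by simp
    have "x \<otimes> y = y \<otimes> x" using bspec[OF xc yG] .
    thus "x \<otimes>\<^bsub>G\<lparr>carrier := grp_center G\<rparr>\<^esub> y = y \<otimes>\<^bsub>G\<lparr>carrier := grp_center G\<rparr>\<^esub> x"
      by simp
  qed
qed

lemma (in group) center_conj: "z \<in> grp_center G \<longleftrightarrow> z \<in> carrier G \<and> (\<forall>x\<in>carrier G. z \<otimes> x \<otimes> inv z = x)"
proof -
  have "z \<otimes> x = x \<otimes> z \<longleftrightarrow> z \<otimes> x \<otimes> inv z = x" if "z \<in> carrier G" "x \<in> carrier G" for x
    using that inv_solve_right[of x "z \<otimes> x" z] by auto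
  thus ?thesis unfolding grp_center_def by auto
qed

lemma center_image:
  assumes G: "group G" and H: "group H" and f: "pq_iso G H f"
  shows "bij_betw f (grp_center G) (grp_center H)"
proof -
  interpret G: group G by (rule G)
  interpret H: group H by (rule H)
  have bij: "bij_betw f (carrier G) (carrier H)" using f unfolding pq_iso_def by auto
  have cj: "\<And>a b. a \<in> carrier G \<Longrightarrow> b \<in> carrier G \<Longrightarrow>
      f (a \<otimes>\<^bsub>G\<^esub> b \<otimes>\<^bsub>G\<^esub> inv\<^bsub>G\<^esub> a) = f a \<otimes>\<^bsub>H\<^esub> f b \<otimes>\<^bsub>H\<^esub> inv\<^bsub>H\<^esub> (f a)"
    using f unfolding pq_iso_def by auto
  have inj: "inj_on f (carrier G)" using bij unfolding bij_betw_def by simp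
  have img: "f ` carrier G = carrier H" using bij unfolding bij_betw_def by simp
  have "f ` grp_center G = grp_center H"
  proof
    show "f ` grp_center G \<subseteq> grp_center H"
    proof
      fix w assume "w \<in> f ` grp_center G"
      then obtain z where z: "z \<in> grp_center G" "w = f z" by auto
      have zG: "z \<in> carrier G" and zc: "\<And>x. x \<in> carrier G \<Longrightarrow> z \<otimes>\<^bsub>G\<^esub> x \<otimes>\<^bsub>G\<^esub> inv\<^bsub>G\<^esub> z = x"
        using z G.center_conj by auto
      have "w \<in> carrier H" using zG z img by auto
      moreover have "\<forall>y\<in>carrier H. w \<otimes>\<^bsub>H\<^esub> y \<otimes>\<^bsub>H\<^esub> inv\<^bsub>H\<^esub> w = y"
      proof
        fix y assume "y \<in> carrier H"
        then obtain x where x: "x \<in> carrier G" "y = f x" using img by auto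
        have "w \<otimes>\<^bsub>H\<^esub> y \<otimes>\<^bsub>H\<^esub> inv\<^bsub>H\<^esub> w = f (z \<otimes>\<^bsub>G\<^esub> x \<otimes>\<^bsub>G\<^esub> inv\<^bsub>G\<^esub> z)"
          using cj[OF zG x(1)] z x by simp
        also have "\<dots> = y" using zc[OF x(1)] x by simp
        finally show "w \<otimes>\<^bsub>H\<^esub> y \<otimes>\<^bsub>H\<^esub> inv\<^bsub>H\<^esub> w = y" .
      qed
      ultimately show "w \<in> grp_center H" using H.center_conj by auto
    qed
  next
    show "grp_center H \<subseteq> f ` grp_center G"
    proof
      fix w assume w: "w \<in> grp_center H"
      have wH: "w \<in> carrier H" and wc: "\<And>y. y \<in> carrier H \<Longrightarrow> w \<otimes>\<^bsub>H\<^esub> y \<otimes>\<^bsub>H\<^esub> inv\<^bsub>H\<^esub> w = y"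
        using w H.center_conj by auto
      obtain z where z: "z \<in> carrier G" "w = f z" using wH img by auto
      have "\<forall>x\<in>carrier G. z \<otimes>\<^bsub>G\<^esub> x \<otimes>\<^bsub>G\<^esub> inv\<^bsub>G\<^esub> z = x"
      proof
        fix x assume x: "x \<in> carrier G"
        have fx: "f x \<in> carrier H" using x img by auto
        have "f (z \<otimes>\<^bsub>G\<^esub> x \<otimes>\<^bsub>G\<^esub> inv\<^bsub>G\<^esub> z) = f x"
          using cj[OF z(1) x] wc[OF fx] z by simp
        moreover have "z \<otimes>\<^bsub>G\<^esub> x \<otimes>\<^bsub>G\<^esub> inv\<^bsub>G\<^esub> z \<in> carrier G" using z x by simp
        ultimately show "z \<otimes>\<^bsub>G\<^esub> x \<otimes>\<^bsub>G\<^esub> inv\<^bsub>G\<^esub> z = x" using inj_onD[OF inj] x by blast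
      qed
      hence "z \<in> grp_center G" using z G.center_conj by auto
      thus "w \<in> f ` grp_center G" using z by auto
    qed
  qed
  moreover have "inj_on f (grp_center G)"
    using inj by (rule inj_on_subset) (simp add: grp_center_def)
  ultimately show ?thesis unfolding bij_betw_def by auto
qed

lemma center_tors:
  assumes G: "group G" and H: "group H" and f: "pq_iso G H f"
  shows "card (tors (G\<lparr>carrier := grp_center G\<rparr>) k) = card (tors (H\<lparr>carrier := grp_center H\<rparr>) k)"
proof -
  interpret G: group G by (rule G)
  interpret H: group H by (rule H)
  have bz: "bij_betw f (grp_center G) (grp_center H)" by (rule center_image[OF G H f])
  have pw: "\<And>a. a \<in> carrier G \<Longrightarrow> f (a [^]\<^bsub>G\<^esub> k) = f a [^]\<^bsub>H\<^esub> k"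
  proof -
    fix a assume "a \<in> carrier G"
    hence "f (a [^]\<^bsub>G\<^esub> (int k)) = f a [^]\<^bsub>H\<^esub> (int k)" using f unfolding pq_iso_def by auto
    thus "f (a [^]\<^bsub>G\<^esub> k) = f a [^]\<^bsub>H\<^esub> k" by (simp add: int_pow_int)
  qed
  have f1: "f \<one>\<^bsub>G\<^esub> = \<one>\<^bsub>H\<^esub>" using f unfolding pq_iso_def by auto
  have inj: "inj_on f (carrier G)" using f unfolding pq_iso_def bij_betw_def by auto
  have ZG: "grp_center G \<subseteq> carrier G" unfolding grp_center_def by auto
  have e: "f ` {x \<in> grp_center G. x [^]\<^bsub>G\<^esub> k = \<one>\<^bsub>G\<^esub>} = {y \<in> grp_center H. y [^]\<^bsub>H\<^esub> k = \<one>\<^bsub>H\<^esub>}"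
  proof
    show "f ` {x \<in> grp_center G. x [^]\<^bsub>G\<^esub> k = \<one>\<^bsub>G\<^esub>} \<subseteq> {y \<in> grp_center H. y [^]\<^bsub>H\<^esub> k = \<one>\<^bsub>H\<^esub>}"
    proof
      fix y assume "y \<in> f ` {x \<in> grp_center G. x [^]\<^bsub>G\<^esub> k = \<one>\<^bsub>G\<^esub>}"
      then obtain x where x: "x \<in> grp_center G" "x [^]\<^bsub>G\<^esub> k = \<one>\<^bsub>G\<^esub>" "y = f x" by auto
      have "y \<in> grp_center H" using x bz bij_betw_apply by fastforce
      moreover have "y [^]\<^bsub>H\<^esub> k = \<one>\<^bsub>H\<^esub>" using x pw[of x] f1 ZG by auto
      ultimately show "y \<in> {y \<in> grp_center H. y [^]\<^bsub>H\<^esub> k = \<one>\<^bsub>H\<^esub>}" by simp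
    qed
  next
    show "{y \<in> grp_center H. y [^]\<^bsub>H\<^esub> k = \<one>\<^bsub>H\<^esub>} \<subseteq> f ` {x \<in> grp_center G. x [^]\<^bsub>G\<^esub> k = \<one>\<^bsub>G\<^esub>}"
    proof
      fix y assume y: "y \<in> {y \<in> grp_center H. y [^]\<^bsub>H\<^esub> k = \<one>\<^bsub>H\<^esub>}"
      have "y \<in> f ` grp_center G" using y bz unfolding bij_betw_def by auto
      then obtain x where x: "x \<in> grp_center G" "y = f x" by auto
      have xG: "x \<in> carrier G" using x ZG by auto
      have "f (x [^]\<^bsub>G\<^esub> k) = f \<one>\<^bsub>G\<^esub>" using pw[OF xG] y x f1 by simp
      hence "x [^]\<^bsub>G\<^esub> k = \<one>\<^bsub>G\<^esub>" by (rule inj_onD[OF inj]) (use xG in auto)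
      thus "y \<in> f ` {x \<in> grp_center G. x [^]\<^bsub>G\<^esub> k = \<one>\<^bsub>G\<^esub>}" using x by auto
    qed
  qed
  have i: "inj_on f {x \<in> grp_center G. x [^]\<^bsub>G\<^esub> k = \<one>\<^bsub>G\<^esub>}"
    using inj by (rule inj_on_subset) (use ZG in auto)
  have "card (f ` {x \<in> grp_center G. x [^]\<^bsub>G\<^esub> k = \<one>\<^bsub>G\<^esub>}) = card {x \<in> grp_center G. x [^]\<^bsub>G\<^esub> k = \<one>\<^bsub>G\<^esub>}"
    by (rule card_image[OF i])
  hence "card {x \<in> grp_center G. x [^]\<^bsub>G\<^esub> k = \<one>\<^bsub>G\<^esub>} = card {y \<in> grp_center H. y [^]\<^bsub>H\<^esub> k = \<one>\<^bsub>H\<^esub>}"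
    unfolding e by simp
  thus ?thesis using tors_sub[OF G.center_subgroup] tors_sub[OF H.center_subgroup] by simp
qed

theorem mainTheorem5:
  fixes G :: "('a, 'c) monoid_scheme" and H :: "('b, 'd) monoid_scheme"
  assumes "group G" and "group H" and "pq_isomorphic G H"
  shows "grp_center G \<approx> grp_center H \<and>
         (finite (grp_center G) \<longrightarrow>
           G\<lparr>carrier := grp_center G\<rparr> \<cong> H\<lparr>carrier := grp_center H\<rparr>)"
proof -
  obtain f where f: "pq_iso G H f" using assms(3) unfolding pq_isomorphic_def by auto
  have bz: "bij_betw f (grp_center G) (grp_center H)" by (rule center_image[OF assms(1,2) f])
  have ep: "grp_center G \<approx> grp_center H" unfolding eqpoll_def using bz by auto
  have "G\<lparr>carrier := grp_center G\<rparr> \<cong> H\<lparr>carrier := grp_center H\<rparr>" if fin: "finite (grp_center G)"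
  proof -
    have finH: "finite (grp_center H)" using bz fin bij_betw_finite by auto
    show ?thesis
    proof (rule count_iso)
      show "comm_group (G\<lparr>carrier := grp_center G\<rparr>)" using group.center_comm[OF assms(1)] .
      show "comm_group (H\<lparr>carrier := grp_center H\<rparr>)" using group.center_comm[OF assms(2)] .
      show "finite (carrier (G\<lparr>carrier := grp_center G\<rparr>))" using fin by simp
      show "finite (carrier (H\<lparr>carrier := grp_center H\<rparr>))" using finH by simp
      show "\<And>k. card (tors (G\<lparr>carrier := grp_center G\<rparr>) k) = card (tors (H\<lparr>carrier := grp_center H\<rparr>) k)"
        by (rule center_tors[OF assms(1,2) f])
    qed
  qed
  thus ?thesis using ep by auto
qed

end
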